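(* Let $n\ge1$, $k=\lfloor n/2\rfloor$, and let $(p_j,u_j)$, $0\le j\le n$, be the coordinates of the trajectory $T_n$. Then $$C_n=2\sum_{j=0}^{k-1}\bigl(3-2p_j-p_ju_j\bigr)+p_k^2.$$
   Context: For $n\ge1$ and $\mathbf{x}=(x_1,\dots,x_n)\in(0,\infty)^n$ let $f_n(\mathbf{x})=\sum_{i=1}^n x_i+\sum_{1\le i\le j\le n}\prod_{k=i}^j \frac1{x_k}$, $A_n=\inf_{\mathbf{x}\in(0,\infty)^n} f_n(\mathbf{x})$, and $C_n=3n-A_n$. Let $\Phi$ be the partial map of $\mathbb{R}^2$ defined for $p\ne0$ by $\Phi(p,u)=\bigl(p^2(u+1)-1,\ 1/p\bigr)$. For $n\ge1$, the trajectory $T_n$ is the (existing and unique) finite sequence $(p_j,u_j)$, $j=0,\dots,n$, with $(p_j,u_j)=\Phi(p_{j-1},u_{j-1})$ for $1\le j\le n$, $u_0=0$, $p_n=0$, and $p_j>0$ for $0\le j\le n-1$. *)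

theory Defs
  imports Complex_Main
begin

definition f_n :: "nat \<Rightarrow> (nat \<Rightarrow> real) \<Rightarrow> real" where
  "f_n n x = (\<Sum>i=1..n. x i) + (\<Sum>i=1..n. \<Sum>j=i..n. \<Prod>k=i..j. 1 / x k)"

definition A_n :: "nat \<Rightarrow> real" where
  "A_n n = Inf (f_n n ` {x. \<forall>i\<in>{1..n}. x i > 0})"

definition C_n :: "nat \<Rightarrow> real" where
  "C_n n = 3 * real n - A_n n"

definition Phi :: "real \<Rightarrow> real \<Rightarrow> real \<times> real" where
  "Phi p u = (p\<^sup>2 * (u + 1) - 1, 1 / p)"

definition is_trajectory :: "nat \<Rightarrow> (nat \<Rightarrow> real) \<Rightarrow> (nat \<Rightarrow> real) \<Rightarrow> bool" where
  "is_trajectory n p u \<longleftrightarrow>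
     u 0 = 0 \<and> p n = 0 \<and> (\<forall>j<n. p j > 0) \<and>
     (\<forall>j\<in>{1..n}. p (j - 1) \<noteq> 0 \<and> (p j, u j) = Phi (p (j - 1)) (u (j - 1)))"

end

theory Submission
  imports Defs
begin

lemma swap_tri:
  fixes g :: "nat \<Rightarrow> nat \<Rightarrow> real"
  shows "(\<Sum>i=1..n. \<Sum>j=i..n. g i j) = (\<Sum>j=1..n. \<Sum>i=1..j. g i j)"
proof (induction n)
  case 0 then show ?case by simp
next
  case (Suc n)
  have "(\<Sum>i=1..Suc n. \<Sum>j=i..Suc n. g i j) = (\<Sum>i=1..n. \<Sum>j=i..Suc n. g i j) + g (Suc n) (Suc n)"
    by simp
  also have "(\<Sum>i=1..n. \<Sum>j=i..Suc n. g i j) = (\<Sum>i=1..n. (\<Sum>j=i..n. g i j) + g i (Suc n))"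
    by (rule sum.cong) auto
  also have "\<dots> = (\<Sum>i=1..n. \<Sum>j=i..n. g i j) + (\<Sum>i=1..n. g i (Suc n))"
    by (simp add: sum.distrib)
  finally show ?case using Suc by simp
qed

lemma tangent:
  fixes t a :: real assumes "t > 0" "a > 0"
  shows "t - a - a * ln (t / a) \<ge> 0"
proof -
  have "ln (t/a) \<le> t/a - 1" using assms by (intro ln_le_minus_one) simp
  then have "a * ln (t/a) \<le> a * (t/a - 1)" using assms by (intro mult_left_mono) auto
  also have "\<dots> = t - a" using assms by (simp add: field_simps)
  finally show ?thesis by simp
qed

lemma tangent_eq:
  fixes t a :: real assumes "t > 0" "a > 0" "t - a - a * ln (t / a) = 0"
  shows "t = a"
proof -
  have "a * ln (t/a) = t - a" using assms(3) by linarith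
  also have "t - a = a * (t/a - 1)" using assms by (simp add: field_simps)
  finally have "a * ln (t/a) = a * (t/a - 1)" .
  then have "ln (t/a) = t/a - 1" using assms by simp
  then have "t/a = 1" using assms by (intro ln_eq_minus_one) auto
  then show ?thesis using assms by simp
qed

lemma S_eq:
  fixes n :: nat and x u :: "nat \<Rightarrow> real"
  assumes xpos: "\<forall>k\<in>{1..n}. x k > 0"
   and u0: "u 0 = 0"
   and hu: "\<forall>k\<in>{1..n}. u k * x k = 1 + u (k-1)"
  shows "j \<le> n \<Longrightarrow> (\<Sum>i=1..j. \<Prod>k=i..j. 1 / x k) = u j"
proof (induction j)
  case 0 then show ?case using u0 by simp
next
  case (Suc j)
  have xs: "x (Suc j) > 0" using xpos Suc.prems by auto
  have "(\<Sum>i=1..Suc j. \<Prod>k=i..Suc j. 1 / x k) = (\<Sum>i=1..j. \<Prod>k=i..Suc j. 1 / x k) + 1 / x (Suc j)"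
    by simp
  also have "(\<Sum>i=1..j. \<Prod>k=i..Suc j. 1 / x k) = (\<Sum>i=1..j. (\<Prod>k=i..j. 1 / x k) / x (Suc j))"
    by (rule sum.cong) auto
  also have "\<dots> = (\<Sum>i=1..j. (\<Prod>k=i..j. 1 / x k)) / x (Suc j)"
    by (simp add: sum_divide_distrib)
  also have "\<dots> = u j / x (Suc j)" using Suc by simp
  finally have "(\<Sum>i=1..Suc j. \<Prod>k=i..Suc j. 1 / x k) = (1 + u j) / x (Suc j)"
    by (simp add: add_divide_distrib)
  also have "\<dots> = u (Suc j)" using hu Suc.prems xs
    by (auto simp: field_simps dest!: bspec[of _ _ "Suc j"])
  finally show ?case .
qed

lemma R_step:
  fixes x u d :: "nat \<Rightarrow> real"
  assumes xs: "x (Suc j) > 0"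
   and S: "(\<Sum>i=1..j. \<Prod>k=i..j. 1 / x k) = u j"
   and hu: "u (Suc j) * x (Suc j) = 1 + u j"
  shows "(\<Sum>i=1..Suc j. (\<Prod>k=i..Suc j. 1 / x k) * (\<Sum>k=i..Suc j. d k))
     = (\<Sum>i=1..j. (\<Prod>k=i..j. 1 / x k) * (\<Sum>k=i..j. d k)) / x (Suc j) + u (Suc j) * d (Suc j)"
proof -
  let ?R = "\<Sum>i=1..j. (\<Prod>k=i..j. 1 / x k) * (\<Sum>k=i..j. d k)"
  have "(\<Sum>i=1..Suc j. (\<Prod>k=i..Suc j. 1 / x k) * (\<Sum>k=i..Suc j. d k))
     = (\<Sum>i=1..j. (\<Prod>k=i..Suc j. 1 / x k) * (\<Sum>k=i..Suc j. d k)) + d (Suc j) / x (Suc j)"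
    by simp
  also have "(\<Sum>i=1..j. (\<Prod>k=i..Suc j. 1 / x k) * (\<Sum>k=i..Suc j. d k))
      = (\<Sum>i=1..j. (\<Prod>k=i..j. 1 / x k) * (\<Sum>k=i..j. d k) / x (Suc j)
            + (\<Prod>k=i..j. 1 / x k) * (d (Suc j) / x (Suc j)))"
    by (rule sum.cong) (auto simp: field_simps add_divide_distrib)
  also have "\<dots> = ?R / x (Suc j) + u j * (d (Suc j) / x (Suc j))"
    by (simp add: sum.distrib sum_divide_distrib sum_distrib_right S[symmetric])
  finally have "(\<Sum>i=1..Suc j. (\<Prod>k=i..Suc j. 1 / x k) * (\<Sum>k=i..Suc j. d k))
      = ?R / x (Suc j) + (1 + u j) * d (Suc j) / x (Suc j)"
    by (simp add: add_divide_distrib distrib_right)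
  also have "(1 + u j) * d (Suc j) / x (Suc j) = u (Suc j) * d (Suc j)"
    using xs hu by (simp add: field_simps)
  finally show ?thesis .
qed

lemma R_tele:
  fixes n :: nat and x u p d R :: "nat \<Rightarrow> real"
  assumes xpos: "\<forall>k\<in>{1..n}. x k > 0"
   and pn: "p n = 0"
   and hp: "\<forall>k\<in>{1..n}. p (k-1) * x k = 1 + p k"
   and hx: "\<forall>k\<in>{1..n}. u k * (1 + p k) = x k"
   and Rstep: "\<forall>j. Suc j \<le> n \<longrightarrow> R (Suc j) = R j / x (Suc j) + u (Suc j) * d (Suc j)"
   and mn: "m \<le> n"
  shows "(\<Sum>j=Suc m..n. R j) = p m * R m + (\<Sum>j=Suc m..n. x j * d j)"
  using mn
proof (induction m rule: inc_induct)
  case base then show ?case using pn by simp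
next
  case (step m)
  have xs: "x (Suc m) > 0" using xpos step by auto
  have hp1: "p m * x (Suc m) = 1 + p (Suc m)" using hp step by (auto dest!: bspec[of _ _ "Suc m"])
  have hx1: "u (Suc m) * (1 + p (Suc m)) = x (Suc m)" using hx step by (auto dest!: bspec[of _ _ "Suc m"])
  have R1: "R (Suc m) = R m / x (Suc m) + u (Suc m) * d (Suc m)" using Rstep step by auto
  have "(\<Sum>j=Suc m..n. R j) = R (Suc m) + (\<Sum>j=Suc (Suc m)..n. R j)"
    using step by (simp add: sum.atLeast_Suc_atMost)
  also have "\<dots> = (1 + p (Suc m)) * R (Suc m) + (\<Sum>j=Suc (Suc m)..n. x j * d j)"
    using step.IH by (simp add: algebra_simps)
  also have "(1 + p (Suc m)) * R (Suc m) = p m * R m + x (Suc m) * d (Suc m)"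
  proof -
    have "(1 + p (Suc m)) * R (Suc m) = (1 + p (Suc m)) / x (Suc m) * R m + (u (Suc m) * (1 + p (Suc m))) * d (Suc m)"
      unfolding R1 by (simp add: algebra_simps)
    also have "(1 + p (Suc m)) / x (Suc m) = p m" using hp1 xs by (simp add: field_simps)
    finally show ?thesis using hx1 by simp
  qed
  also have "(\<Sum>j=Suc m..n. x j * d j) = x (Suc m) * d (Suc m) + (\<Sum>j=Suc (Suc m)..n. x j * d j)"
    using step by (simp add: sum.atLeast_Suc_atMost)
  ultimately show ?case by simp
qed

lemma lower_bound:
  fixes n :: nat and x u p y :: "nat \<Rightarrow> real"
  assumes xpos: "\<forall>k\<in>{1..n}. x k > 0"
   and u0: "u 0 = 0" and pn: "p n = 0"
   and hu: "\<forall>k\<in>{1..n}. u k * x k = 1 + u (k-1)"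
   and hp: "\<forall>k\<in>{1..n}. p (k-1) * x k = 1 + p k"
   and hx: "\<forall>k\<in>{1..n}. u k * (1 + p k) = x k"
   and ypos: "\<forall>k\<in>{1..n}. y k > 0"
  shows "f_n n x \<le> f_n n y \<and> (f_n n y = f_n n x \<longrightarrow> (\<forall>k\<in>{1..n}. y k = x k))"
proof -
  define d where "d k = ln (y k / x k)" for k
  define P where "P z i j = (\<Prod>k=i..j. 1 / z k)" for z :: "nat \<Rightarrow> real" and i j
  define D where "D i j = (\<Sum>k=i..j. d k)" for i j
  define R where "R j = (\<Sum>i=1..j. P x i j * D i j)" for j
  have Rstep: "\<forall>j. Suc j \<le> n \<longrightarrow> R (Suc j) = R j / x (Suc j) + u (Suc j) * d (Suc j)"
  proof (intro allI impI)
    fix j assume j: "Suc j \<le> n"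
    have xs: "x (Suc j) > 0" using xpos j by auto
    have S: "(\<Sum>i=1..j. \<Prod>k=i..j. 1 / x k) = u j" using S_eq[OF xpos u0 hu] j by simp
    have hu1: "u (Suc j) * x (Suc j) = 1 + u j" using hu j by (auto dest!: bspec[of _ _ "Suc j"])
    show "R (Suc j) = R j / x (Suc j) + u (Suc j) * d (Suc j)"
      unfolding R_def P_def D_def using R_step[OF xs S hu1, of d] .
  qed
  have tele: "(\<Sum>j=1..n. R j) = (\<Sum>j=1..n. x j * d j)"
    using R_tele[OF xpos pn hp hx Rstep, of 0] by (simp add: R_def)
  have Su: "(\<Sum>j=1..n. \<Sum>i=1..j. P x i j) = (\<Sum>j=1..n. u j)"
    unfolding P_def using S_eq[OF xpos u0 hu] by (intro sum.cong) auto
  have Ppos: "P z i j > 0" if "\<forall>k\<in>{1..n}. z k > 0" "1 \<le> i" "j \<le> n" for z i j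
    unfolding P_def using that by (intro prod_pos) auto
  have logP: "ln (P y i j / P x i j) = - D i j" if "1 \<le> i" "j \<le> n" for i j
  proof -
    have "P y i j / P x i j = (\<Prod>k=i..j. x k / y k)"
      unfolding P_def prod_dividef[symmetric] using that xpos ypos by (intro prod.cong) auto
    moreover have "ln (\<Prod>k=i..j. x k / y k) = (\<Sum>k=i..j. ln (x k / y k))"
    proof (rule ln_prod)
      fix k assume "k \<in> {i..j}"
      then have "k \<in> {1..n}" using that by auto
      then show "x k / y k \<noteq> 0" using xpos ypos by force
    qed simp
    ultimately have "ln (P y i j / P x i j) = (\<Sum>k=i..j. ln (x k / y k))" by simp
    also have "\<dots> = (\<Sum>k=i..j. - d k)"
      unfolding d_def using that xpos ypos by (intro sum.cong) (auto simp: ln_div)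
    finally show ?thesis by (simp add: D_def sum_negf)
  qed
  define sy where "sy k = y k - x k - x k * d k" for k
  define sP where "sP i j = P y i j - P x i j - P x i j * ln (P y i j / P x i j)" for i j
  have sy_nn: "sy k \<ge> 0" if "k \<in> {1..n}" for k
    unfolding sy_def d_def using that xpos ypos by (intro tangent) auto
  have sP_nn: "sP i j \<ge> 0" if "i \<in> {1..n}" "j \<in> {i..n}" for i j
    unfolding sP_def using that by (intro tangent Ppos) (auto simp: xpos ypos)
  have sP_eq: "sP i j = P y i j - P x i j + P x i j * D i j" if "i \<in> {1..n}" "j \<in> {i..n}" for i j
    unfolding sP_def using that logP by simp
  have swapR: "(\<Sum>i=1..n. \<Sum>j=i..n. P x i j * D i j) = (\<Sum>j=1..n. R j)"
    unfolding R_def by (rule swap_tri)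
  have fy: "f_n n y = (\<Sum>k=1..n. y k) + (\<Sum>i=1..n. \<Sum>j=i..n. P y i j)"
    unfolding f_n_def P_def ..
  have fx: "f_n n x = (\<Sum>k=1..n. x k) + (\<Sum>i=1..n. \<Sum>j=i..n. P x i j)"
    unfolding f_n_def P_def ..
  have sumsP: "(\<Sum>i=1..n. \<Sum>j=i..n. sP i j) = (\<Sum>i=1..n. \<Sum>j=i..n. P y i j) - (\<Sum>i=1..n. \<Sum>j=i..n. P x i j) + (\<Sum>i=1..n. \<Sum>j=i..n. P x i j * D i j)"
  proof -
    have "(\<Sum>i=1..n. \<Sum>j=i..n. sP i j) = (\<Sum>i=1..n. \<Sum>j=i..n. P y i j - P x i j + P x i j * D i j)"
      by (intro sum.cong refl) (auto simp: sP_eq)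
    then show ?thesis by (simp add: sum.distrib sum_subtractf)
  qed
  have sumsy: "(\<Sum>k=1..n. sy k) = (\<Sum>k=1..n. y k) - (\<Sum>k=1..n. x k) - (\<Sum>k=1..n. x k * d k)"
    unfolding sy_def by (simp add: sum.distrib sum_subtractf)
  have key: "f_n n y - f_n n x = (\<Sum>k=1..n. sy k) + (\<Sum>i=1..n. \<Sum>j=i..n. sP i j)"
    unfolding fy fx sumsP sumsy swapR tele by simp
  have A: "(\<Sum>k=1..n. sy k) \<ge> 0" by (intro sum_nonneg sy_nn)
  have B: "(\<Sum>i=1..n. \<Sum>j=i..n. sP i j) \<ge> 0" by (intro sum_nonneg sP_nn) auto
  have "f_n n x \<le> f_n n y" using key A B by linarith
  moreover have "\<forall>k\<in>{1..n}. y k = x k" if eq: "f_n n y = f_n n x"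
  proof
    fix k assume k: "k \<in> {1..n}"
    have "(\<Sum>k=1..n. sy k) = 0" using key A B eq by linarith
    then have "sy k = 0" using sum_nonneg_eq_0_iff[of "{1..n}" sy] sy_nn k by auto
    then have "y k - x k - x k * ln (y k / x k) = 0" unfolding sy_def d_def .
    moreover have "y k > 0" "x k > 0" using k xpos ypos by auto
    ultimately show "y k = x k" using tangent_eq by blast
  qed
  ultimately show ?thesis by blast
qed

lemma fval:
  fixes n :: nat and x u :: "nat \<Rightarrow> real"
  assumes xpos: "\<forall>k\<in>{1..n}. x k > 0"
   and u0: "u 0 = 0"
   and hu: "\<forall>k\<in>{1..n}. u k * x k = 1 + u (k-1)"
  shows "f_n n x = (\<Sum>k=1..n. x k + u k)"
proof -
  have "(\<Sum>i=1..n. \<Sum>j=i..n. \<Prod>k=i..j. 1 / x k) = (\<Sum>j=1..n. \<Sum>i=1..j. \<Prod>k=i..j. 1 / x k)"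
    by (rule swap_tri)
  also have "\<dots> = (\<Sum>j=1..n. u j)"
    using S_eq[OF xpos u0 hu] by (intro sum.cong) auto
  finally show ?thesis unfolding f_n_def by (simp add: sum.distrib)
qed

lemma traj_props:
  assumes T: "is_trajectory n p u"
  defines "x \<equiv> \<lambda>k. p (k-1) * (1 + u (k-1))"
  shows "u 0 = 0" "p n = 0" "\<forall>j<n. p j > 0"
    "\<forall>j\<in>{1..n}. u j = 1 / p (j-1)"
    "\<forall>j\<in>{1..n}. p j = (p (j-1))\<^sup>2 * (u (j-1) + 1) - 1"
    "\<forall>j\<in>{1..n}. u j > 0"
    "\<forall>k\<in>{1..n}. x k > 0"
    "\<forall>k\<in>{1..n}. u k * x k = 1 + u (k-1)"
    "\<forall>k\<in>{1..n}. p (k-1) * x k = 1 + p k"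
    "\<forall>k\<in>{1..n}. u k * (1 + p k) = x k"
proof -
  show u0: "u 0 = 0" and "p n = 0" and ppos: "\<forall>j<n. p j > 0"
    using T unfolding is_trajectory_def by auto
  show hu: "\<forall>j\<in>{1..n}. u j = 1 / p (j-1)"
    and hp: "\<forall>j\<in>{1..n}. p j = (p (j-1))\<^sup>2 * (u (j-1) + 1) - 1"
    using T unfolding is_trajectory_def Phi_def by auto
  show upos: "\<forall>j\<in>{1..n}. u j > 0" using hu ppos by auto
  have unn: "u j \<ge> 0" if "j < n" for j
  proof (cases j)
    case (Suc i) then have "j \<in> {1..n}" using that by auto
    then show ?thesis using upos by (auto intro: less_imp_le)
  qed (use u0 in simp)
  have pp: "p (k-1) > 0" if "k \<in> {1..n}" for k using ppos that by auto
  have un: "u (k-1) \<ge> 0" if "k \<in> {1..n}" for k using unn that by auto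
  show "\<forall>k\<in>{1..n}. x k > 0" unfolding x_def using pp un by (auto intro!: mult_pos_pos add_pos_nonneg)
  show "\<forall>k\<in>{1..n}. u k * x k = 1 + u (k-1)"
  proof
    fix k assume k: "k \<in> {1..n}"
    have a: "p (k-1) > 0" by (rule pp[OF k])
    have "u k = 1 / p (k-1)" using hu k by auto
    then show "u k * x k = 1 + u (k-1)" unfolding x_def using a by (simp add: field_simps)
  qed
  show "\<forall>k\<in>{1..n}. p (k-1) * x k = 1 + p k" unfolding x_def using hp
    by (auto simp: power2_eq_square algebra_simps)
  show "\<forall>k\<in>{1..n}. u k * (1 + p k) = x k"
  proof
    fix k assume k: "k \<in> {1..n}"
    have a: "p (k-1) > 0" by (rule pp[OF k])
    have "u k = 1 / p (k-1)" "p k = (p (k-1))\<^sup>2 * (u (k-1) + 1) - 1" using hu hp k by auto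
    then have e1: "1 + p k = p (k-1) * (p (k-1) * (1 + u (k-1)))" and e2: "u k * p (k-1) = 1"
      using a by (simp_all add: power2_eq_square algebra_simps)
    have "u k * (1 + p k) = (u k * p (k-1)) * (p (k-1) * (1 + u (k-1)))" unfolding e1 by (simp only: mult_ac)
    then show "u k * (1 + p k) = x k" unfolding x_def e2 by simp
  qed
qed

lemma traj_rev:
  assumes T: "is_trajectory n p u"
  shows "is_trajectory n (\<lambda>j. u (n-j)) (\<lambda>j. p (n-j))"
proof -
  note P = traj_props[OF T]
  have step: "u (n-(j-1)) \<noteq> 0 \<and> (u (n-j), p (n-j)) = Phi (u (n-(j-1))) (p (n-(j-1)))"
    if j: "j \<in> {1..n}" for j
  proof -
    define m where "m = n - j"
    have m: "m < n" "n - (j-1) = Suc m" "Suc m \<in> {1..n}" using j by (auto simp: m_def)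
    have pm: "p m > 0" using P(3) m by auto
    have e1: "u (Suc m) = 1 / p m" using P(4) m(3) by (metis diff_Suc_1)
    have e2: "p (Suc m) = (p m)\<^sup>2 * (u m + 1) - 1" using P(5) m(3) by (metis diff_Suc_1)
    have "(u (Suc m))\<^sup>2 * (p (Suc m) + 1) - 1 = u m"
      unfolding e1 e2 using pm by (simp add: field_simps power2_eq_square)
    moreover have "1 / u (Suc m) = p m" unfolding e1 by simp
    moreover have "u (Suc m) \<noteq> 0" unfolding e1 using pm by simp
    ultimately show ?thesis unfolding m(2) Phi_def m_def[symmetric] by simp
  qed
  show ?thesis unfolding is_trajectory_def
    using P(1,2) P(6) step by auto
qed

lemma shift1: "(\<Sum>k=1..n. g k) = (\<Sum>j<n. g (Suc j) :: real)"
  by (induction n) auto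

theorem lemma8:
  fixes n :: nat and p u :: "nat \<Rightarrow> real"
  assumes "n \<ge> 1"
    and "is_trajectory n p u"
  shows "C_n n = 2 * (\<Sum>j<n div 2. 3 - 2 * p j - p j * u j) + (p (n div 2))\<^sup>2"
proof -
  note T = assms(2)
  define x where "x k = p (k-1) * (1 + u (k-1))" for k
  define x' where "x' k = u (n-(k-1)) * (1 + p (n-(k-1)))" for k
  note P = traj_props[OF T]
  note P' = traj_props[OF traj_rev[OF T]]
  have u0: "u 0 = 0" and pn: "p n = 0" and ppos: "\<forall>j<n. p j > 0" using P(1-3) .
  have hu0: "\<forall>j\<in>{1..n}. u j = 1 / p (j-1)" using P(4) .
  have hp0: "\<forall>j\<in>{1..n}. p j = (p (j-1))\<^sup>2 * (u (j-1) + 1) - 1" using P(5) .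
  have xpos: "\<forall>k\<in>{1..n}. x k > 0" using P(7) by (simp add: x_def)
  have hu: "\<forall>k\<in>{1..n}. u k * x k = 1 + u (k-1)" using P(8) by (simp add: x_def)
  have hp: "\<forall>k\<in>{1..n}. p (k-1) * x k = 1 + p k" using P(9) by (simp add: x_def)
  have hx: "\<forall>k\<in>{1..n}. u k * (1 + p k) = x k" using P(10) by (simp add: x_def)
  have x'pos: "\<forall>k\<in>{1..n}. x' k > 0" using P'(7) by (simp add: x'_def)
  have hu': "\<forall>k\<in>{1..n}. p (n-k) * x' k = 1 + p (n-(k-1))" using P'(8) by (simp add: x'_def)
  have hp': "\<forall>k\<in>{1..n}. u (n-(k-1)) * x' k = 1 + u (n-k)" using P'(9) by (simp add: x'_def)
  have hx': "\<forall>k\<in>{1..n}. p (n-k) * (1 + u (n-k)) = x' k" using P'(10) by (simp add: x'_def)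
  have u0': "p (n-0) = 0" and pn': "u (n-n) = 0" using P'(1,2) by simp_all
  note lb1 = lower_bound[OF xpos u0 pn hu hp hx x'pos]
  have lb2: "f_n n x' \<le> f_n n x"
    using lower_bound[OF x'pos u0' pn' hu' hp' hx' xpos] by simp
  have xx': "\<forall>k\<in>{1..n}. x' k = x k" using lb1 lb2 by auto
  have xsym: "x (Suc (n-k)) = x k" if k: "k \<in> {1..n}" for k
  proof -
    have e: "n-(k-1) = Suc (n-k)" "Suc (n-k) \<in> {1..n}" using k by auto
    have "x' k = u (Suc (n-k)) * (1 + p (Suc (n-k)))" unfolding x'_def e(1) ..
    also have "\<dots> = x (Suc (n-k))" using hx e(2) by blast
    finally show ?thesis using xx' k by simp
  qed
  have psym: "p j = u (n-j)" if "j \<le> n" for j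
    using that
  proof (induction j rule: inc_induct)
    case base then show ?case using pn u0 by simp
  next
    case (step j)
    have k: "n - j \<in> {1..n}" "Suc j \<in> {1..n}" using step by auto
    have xs: "x (Suc j) > 0" using xpos k by auto
    have "u (n-j) * x (n-j) = 1 + u (n - j - 1)" using hu k by auto
    moreover have "n - j - 1 = n - Suc j" by simp
    moreover have "x (n-j) = x (Suc j)" using xsym[OF k(2)] step by (simp add: Suc_diff_Suc)
    ultimately have "u (n-j) * x (Suc j) = 1 + p (Suc j)" using step.IH by simp
    moreover have "p j * x (Suc j) = 1 + p (Suc j)" using hp k by (metis diff_Suc_1)
    ultimately show ?case using xs by (metis mult_right_cancel less_irrefl)
  qed
  have usym: "u i = p (n-i)" if "i \<le> n" for i using psym[of "n-i"] that by simp
  have An: "A_n n = f_n n x"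
    unfolding A_n_def
  proof (rule cInf_eq_minimum)
    show "f_n n x \<in> f_n n ` {x. \<forall>i\<in>{1..n}. 0 < x i}" using xpos by blast
    fix z assume "z \<in> f_n n ` {x. \<forall>i\<in>{1..n}. 0 < x i}"
    then obtain y where y: "\<forall>i\<in>{1..n}. 0 < y i" "z = f_n n y" by blast
    show "f_n n x \<le> z" using lower_bound[OF xpos u0 pn hu hp hx y(1)] y(2) by simp
  qed
  define a where "a j = 3 - 2 * p j - p j * u j" for j
  define b where "b j = 3 - x (Suc j) - u (Suc j)" for j
  have C1: "C_n n = (\<Sum>j<n. b j)"
    unfolding C_n_def An fval[OF xpos u0 hu] shift1 b_def
    by (simp add: sum_subtractf sum.distrib)
  have ba: "b j = a j + p (Suc j) * u (Suc j) - p j * u j" if "j < n" for j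
  proof -
    have k: "Suc j \<in> {1..n}" using that by auto
    have pj: "p j > 0" using ppos that by auto
    have e1: "u (Suc j) = 1 / p j" using hu0 k by (metis diff_Suc_1)
    have e2: "p (Suc j) = (p j)\<^sup>2 * (u j + 1) - 1" using hp0 k by (metis diff_Suc_1)
    have e3: "x (Suc j) = p j * (1 + u j)" by (simp add: x_def)
    show ?thesis unfolding a_def b_def e1 e2 e3 using pj
      by (simp add: field_simps power2_eq_square)
  qed
  have tel: "(\<Sum>j<t. b j) = (\<Sum>j<t. a j) + p t * u t" if "t \<le> n" for t
    using that
  proof (induction t)
    case 0 then show ?case using u0 by simp
  next
    case (Suc t) then show ?case using ba[of t] by simp
  qed
  have ab: "b (n - 1 - j) = a j" if "j < n" for j
  proof -
    have e: "n - 1 - j = n - Suc j" "Suc (n - Suc j) = n - j" using that by auto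
    have "x (n - j) = x (Suc j)" using xsym[of "Suc j"] that e by auto
    moreover have "u (n-j) = p j" using psym[of j] that by simp
    ultimately show ?thesis unfolding a_def b_def e x_def by (simp add: algebra_simps)
  qed
  define m where "m = n div 2"
  have mn: "m \<le> n" unfolding m_def by simp
  have rev: "(\<Sum>j\<in>{m..<n}. a j) = (\<Sum>i<n-m. b i)"
  proof (rule sum.reindex_bij_witness[where i="\<lambda>j. n - 1 - j" and j="\<lambda>j. n - 1 - j"])
    fix j assume "j \<in> {m..<n}" then show "b (n - 1 - j) = a j" using ab by auto
  qed auto
  have split: "(\<Sum>j<n. a j) = (\<Sum>j<m. a j) + (\<Sum>j\<in>{m..<n}. a j)"
    using mn by (metis atLeast0LessThan sum.atLeastLessThan_concat zero_le)
  have Ca: "C_n n = (\<Sum>j<m. a j) + (\<Sum>i<n-m. b i)"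
    using C1 tel[of n] pn split rev by simp
  show ?thesis
  proof (cases "even n")
    case True
    then have nm: "n - m = m" unfolding m_def by auto
    have "u m = p m" using usym[of m] mn nm by simp
    then show ?thesis using Ca tel[of m] mn unfolding nm m_def[symmetric] a_def[symmetric]
      by (simp add: power2_eq_square)
  next
    case False
    then have nm: "n - m = Suc m" and mlt: "m < n" unfolding m_def by presburger+
    have pm: "p m > 0" using ppos mlt by auto
    have nsm: "n - Suc m = m" using nm by arith
    have sml: "Suc m \<le> n" using nm by arith
    have e1: "u (Suc m) = p m" using usym[OF sml] nsm by simp
    have e2: "p (Suc m) = u m" using psym[OF sml] nsm by simp
    have e3: "u (Suc m) = 1 / p m" using hu0 mlt by (metis Suc_leI atLeastAtMost_iff diff_Suc_1 le_add1 plus_1_eq_Suc)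
    have "p m * p m = 1" using e1 e3 pm by (simp add: field_simps)
    then have "(p m - 1) * (p m + 1) = 0" by (simp add: algebra_simps)
    then have p1: "p m = 1" using pm by simp
    have "(\<Sum>i<n-m. b i) = (\<Sum>j<m. a j) + a m + p (Suc m) * u (Suc m)"
      using tel[of "Suc m"] mlt nm by simp
    then show ?thesis using Ca e1 e2 p1 unfolding m_def[symmetric] a_def[symmetric]
      by (simp add: a_def)
  qed
qed

end
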